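(* Let $n\ge1$, let $z_1,\dots,z_n$ be indeterminates, and let $m_2\ge1$, $m_1\ge0$ be integers. Then \begin{align*} M(m_2,m_1,n)=\;& m_2!\,m_1!\,(n-m_1-m_2)\sum_{i=0}^{m_2}(-1)^i\,c_i\,e_{m_2-i}\,e_{m_2+m_1+i}\\ &-(m_2-1)!\,(m_1+2)!\sum_{i=0}^{m_2-1}(-1)^i\,\frac{(m_1+2+2i)(m_1+i+1)!}{i!\,(m_1+2)!}\,e_{m_2-1-i}\,e_{m_2+m_1+1+i}, \end{align*} where $c_0=1$ and $c_i=\frac{(m_1+2i)(m_1+i-1)!}{i!\,m_1!}$ for $i\ge1$.
   Context: $e_r$ is the elementary symmetric polynomial of degree $r$ in $z_1,\dots,z_n$, with $e_0=1$ and $e_r=0$ for $r>n$. For $m_2\ge1$, $m_1\ge0$, with $N=m_1+m_2+1$ and the sums running over all $N$-tuples $(b_1,\dots,b_N)$ of pairwise distinct elements of $\{1,\dots,n\}$, \[ M(m_2,m_1,n)=\sum_{b} z_{b_1}^2\cdots z_{b_{m_2}}^2\,z_{b_{m_2+1}}\cdots z_{b_{m_2+m_1}}\;-\;\sum_{b} z_{b_1}^2\cdots z_{b_{m_2-1}}^2\,z_{b_{m_2}}z_{b_{m_2+1}}\cdots z_{b_{m_2+m_1+1}}. \] *)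

theory Defs
  imports Complex_Main "HOL-Library.FuncSet"
begin

text \<open>Polynomials in the indeterminates z_1..z_n are represented by evaluation at an
arbitrary point z :: nat => real (only z 1, ..., z n matter). A polynomial identity with
rational coefficients holds iff it holds for all real evaluations.\<close>

definition elem_sym :: "nat \<Rightarrow> nat \<Rightarrow> (nat \<Rightarrow> real) \<Rightarrow> real" where
  "elem_sym n r z = (\<Sum>S\<in>{S. S \<subseteq> {1..n} \<and> card S = r}. \<Prod>j\<in>S. z j)"

definition distinct_tuples :: "nat \<Rightarrow> nat \<Rightarrow> (nat \<Rightarrow> nat) set" where
  "distinct_tuples N n = {b \<in> {1..N} \<rightarrow>\<^sub>E {1..n}. inj_on b {1..N}}"

definition M :: "nat \<Rightarrow> nat \<Rightarrow> nat \<Rightarrow> (nat \<Rightarrow> real) \<Rightarrow> real" where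
  "M m2 m1 n z =
     (\<Sum>b\<in>distinct_tuples (m1 + m2 + 1) n.
        (\<Prod>j\<in>{1..m2}. (z (b j))^2) * (\<Prod>j\<in>{m2+1..m2+m1}. z (b j)))
   - (\<Sum>b\<in>distinct_tuples (m1 + m2 + 1) n.
        (\<Prod>j\<in>{1..m2-1}. (z (b j))^2) * (\<Prod>j\<in>{m2..m2+m1+1}. z (b j)))"

definition coef_c :: "nat \<Rightarrow> nat \<Rightarrow> real" where
  "coef_c m1 i = (if i = 0 then 1
     else real (m1 + 2*i) * fact (m1 + i - 1) / (fact i * fact m1))"

end

theory Submission
  imports Defs
begin

fun EE :: "(nat \<Rightarrow> real) \<Rightarrow> nat \<Rightarrow> int \<Rightarrow> real" where
  "EE z 0 r = (if r = 0 then 1 else 0)"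
| "EE z (Suc n) r = EE z n r + z (Suc n) * EE z n (r - 1)"

lemma EE_neg: "r < 0 \<Longrightarrow> EE z n r = 0"
  by (induction n arbitrary: r) auto

fun GG :: "(nat \<Rightarrow> real) \<Rightarrow> nat \<Rightarrow> nat \<Rightarrow> nat \<Rightarrow> nat \<Rightarrow> real" where
  "GG z 0 a b c = (if a = 0 \<and> b = 0 \<and> c = 0 then 1 else 0)"
| "GG z (Suc n) a b c = GG z n a b c
     + (if a > 0 then z (Suc n)^2 * GG z n (a-1) b c else 0)
     + (if b > 0 then z (Suc n) * GG z n a (b-1) c else 0)
     + (if c > 0 then GG z n a b (c-1) else 0)"

definition cc :: "nat \<Rightarrow> nat \<Rightarrow> real" where
  "cc b i = real ((b+i) choose i) + (if i = 0 then 0 else real ((b+i-1) choose (i-1)))"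

lemma cc_rec: "cc (Suc b) i - (if i = 0 then 0 else cc (Suc b) (i-1)) = cc b i"
proof (cases i)
  case 0 then show ?thesis by (simp add: cc_def)
next
  case (Suc k)
  show ?thesis
  proof (cases k)
    case 0 then show ?thesis using Suc by (simp add: cc_def)
  next
    case (Suc l)
    have "((Suc b + Suc k) choose Suc k) = ((b + Suc k) choose Suc k) + ((b + Suc k) choose k)"
      by simp
    moreover have "((b + Suc k) choose k) = ((b+k) choose k) + ((b+k) choose l)" using Suc by simp
    ultimately show ?thesis using Suc \<open>i = Suc k\<close> by (simp add: cc_def algebra_simps)
  qed
qed

lemma telescope:
  fixes c g :: "nat \<Rightarrow> real"
  shows "(\<Sum>i\<le>a. (-1)^i * c i * (g (Suc i) + g i)) =
    (\<Sum>i\<le>a. (-1)^i * (c i - (if i = 0 then 0 else c (i-1))) * g i) + (-1)^a * c a * g (Suc a)"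
  by (induction a) (auto simp: algebra_simps)

lemma telescope0:
  fixes d g :: "nat \<Rightarrow> real"
  assumes "\<And>i. i \<ge> 2 \<Longrightarrow> d i = 0"
  shows "(\<Sum>i\<le>Suc a. (-1)^i * d i * g i) = d 0 * g 0 - d 1 * g 1"
  using assms by (induction a) auto

lemma main_id:
  "GG z n a b 0 = (\<Sum>i\<le>a. (-1)^i * cc b i * EE z n (int a - int i) * EE z n (int a + int b + int i))"
proof (induction n arbitrary: a b)
  case 0
  show ?case
  proof (cases a)
    case 0 then show ?thesis by (simp add: cc_def)
  next
    case (Suc a')
    then show ?thesis by (auto intro!: sum.neutral)
  qed
next
  case (Suc n)
  note IH = Suc.IH
  define x where "x = z (Suc n)"
  define E where "E = EE z n"
  have Eneg: "E r = 0" if "r < 0" for r using EE_neg that E_def by simp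
  have X2: "(\<Sum>i\<le>a. (-1)^i * cc b i * (E (int a - int i - 1) * E (int a + int b + int i - 1)))
     = (if a > 0 then GG z n (a-1) b 0 else 0)"
  proof (cases a)
    case 0 then show ?thesis by (simp add: Eneg)
  next
    case (Suc a')
    have "(\<Sum>i\<le>a. (-1)^i * cc b i * (E (int a - int i - 1) * E (int a + int b + int i - 1)))
      = (\<Sum>i\<le>a'. (-1)^i * cc b i * (E (int a - int i - 1) * E (int a + int b + int i - 1)))"
      using Suc by (simp add: Eneg)
    also have "\<dots> = GG z n a' b 0" unfolding IH[of a' b] E_def using Suc
      by (intro sum.cong) (auto simp: algebra_simps)
    finally show ?thesis using Suc by simp
  qed
  define g where "g i = E (int a - int i) * E (int a + int b - 1 + int i)" for i
  have X1: "(\<Sum>i\<le>a. (-1)^i * cc b i * (E (int a - int i - 1) * E (int a + int b + int i)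
       + E (int a - int i) * E (int a + int b + int i - 1)))
     = (if b > 0 then GG z n a (b-1) 0 else 0)"
  proof -
    have "(\<Sum>i\<le>a. (-1)^i * cc b i * (E (int a - int i - 1) * E (int a + int b + int i)
       + E (int a - int i) * E (int a + int b + int i - 1)))
      = (\<Sum>i\<le>a. (-1)^i * cc b i * (g (Suc i) + g i))"
      unfolding g_def by (intro sum.cong) (auto simp: algebra_simps)
    also have "\<dots> = (\<Sum>i\<le>a. (-1)^i * (cc b i - (if i = 0 then 0 else cc b (i-1))) * g i)"
      unfolding telescope by (simp add: g_def Eneg)
    also have "\<dots> = (if b > 0 then GG z n a (b-1) 0 else 0)"
    proof (cases b)
      case 0
      show ?thesis
      proof (cases a)
        case 0 then show ?thesis using \<open>b = 0\<close> by (simp add: g_def Eneg)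
      next
        case (Suc a')
        have "(\<Sum>i\<le>Suc a'. (-1)^i * (cc b i - (if i = 0 then 0 else cc b (i-1))) * g i)
          = (cc 0 0 - 0) * g 0 - (cc 0 1 - cc 0 0) * g 1"
          using \<open>b = 0\<close> by (subst telescope0) (auto simp: cc_def)
        also have "\<dots> = 0" using Suc \<open>b = 0\<close> by (simp add: cc_def g_def add.commute)
        finally show ?thesis using Suc \<open>b = 0\<close> by simp
      qed
    next
      case (Suc b')
      have "(\<Sum>i\<le>a. (-1)^i * (cc b i - (if i = 0 then 0 else cc b (i-1))) * g i) = GG z n a b' 0"
        unfolding IH[of a b'] using \<open>b = Suc b'\<close>
      proof (intro sum.cong refl)
        fix i
        have h: "cc b i - (if i = 0 then 0 else cc b (i-1)) = cc b' i"
          using cc_rec[of b' i] \<open>b = Suc b'\<close> by (simp only:)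
        show "(-1)^i * (cc b i - (if i = 0 then 0 else cc b (i-1))) * g i =
          (-1)^i * cc b' i * EE z n (int a - int i) * EE z n (int a + int b' + int i)"
          unfolding h g_def E_def using \<open>b = Suc b'\<close> by (simp add: algebra_simps)
      qed
      then show ?thesis using \<open>b = Suc b'\<close> by simp
    qed
    finally show ?thesis .
  qed
  have "(\<Sum>i\<le>a. (-1)^i * cc b i * EE z (Suc n) (int a - int i) * EE z (Suc n) (int a + int b + int i))
    = (\<Sum>i\<le>a. (-1)^i * cc b i * E (int a - int i) * E (int a + int b + int i))
      + x^2 * (\<Sum>i\<le>a. (-1)^i * cc b i * (E (int a - int i - 1) * E (int a + int b + int i - 1)))
      + x * (\<Sum>i\<le>a. (-1)^i * cc b i * (E (int a - int i - 1) * E (int a + int b + int i)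
       + E (int a - int i) * E (int a + int b + int i - 1)))"
    unfolding sum_distrib_left sum.distrib[symmetric]
    by (intro sum.cong) (auto simp: E_def x_def algebra_simps power2_eq_square)
  also have "\<dots> = GG z (Suc n) a b 0"
    unfolding X1 X2 by (simp add: IH[of a b] E_def x_def)
  finally show ?case by simp
qed

lemma GG1: "GG z n a b 1 = (real n - real a - real b) * GG z n a b 0"
proof (induction n arbitrary: a b)
  case 0 then show ?case by simp
next
  case (Suc n)
  show ?case
  proof (cases a)
    case 0
    show ?thesis
    proof (cases b)
      case 0 show ?thesis using \<open>a = 0\<close> \<open>b = 0\<close> by (simp add: Suc.IH[unfolded One_nat_def] algebra_simps)
    next
      case (Suc b') show ?thesis using \<open>a = 0\<close> \<open>b = Suc b'\<close> by (simp add: Suc.IH[unfolded One_nat_def] algebra_simps)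
    qed
  next
    case (Suc a')
    show ?thesis
    proof (cases b)
      case 0 show ?thesis using \<open>a = Suc a'\<close> \<open>b = 0\<close> by (simp add: Suc.IH[unfolded One_nat_def] algebra_simps)
    next
      case (Suc b') show ?thesis using \<open>a = Suc a'\<close> \<open>b = Suc b'\<close> by (simp add: Suc.IH[unfolded One_nat_def] algebra_simps)
    qed
  qed
qed

lemma elem_sym_0: "elem_sym n 0 z = 1"
proof -
  have "{S. S \<subseteq> {1..n} \<and> card S = 0} = {{}}"
    using finite_subset[of _ "{1..n}"] by auto
  then show ?thesis by (simp add: elem_sym_def)
qed

lemma elem_sym_Suc: "elem_sym (Suc n) (Suc k) z = elem_sym n (Suc k) z + z (Suc n) * elem_sym n k z"
proof -
  define A where "A = {S. S \<subseteq> {1..n} \<and> card S = Suc k}"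
  define B where "B = {S. S \<subseteq> {1..n} \<and> card S = k}"
  have fA: "finite A" unfolding A_def by (rule finite_subset[of _ "Pow {1..n}"]) auto
  have fB: "finite B" unfolding B_def by (rule finite_subset[of _ "Pow {1..n}"]) auto
  have eq: "{S. S \<subseteq> {1..Suc n} \<and> card S = Suc k} = A \<union> insert (Suc n) ` B"
  proof (intro equalityI subsetI)
    fix S assume S: "S \<in> {S. S \<subseteq> {1..Suc n} \<and> card S = Suc k}"
    have fS: "finite S" using S finite_subset[of S "{1..Suc n}"] by auto
    show "S \<in> A \<union> insert (Suc n) ` B"
    proof (cases "Suc n \<in> S")
      case True
      have "S - {Suc n} \<in> B" using S True fS unfolding B_def by auto
      moreover have "S = insert (Suc n) (S - {Suc n})" using True by auto
      ultimately show ?thesis by blast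
    next
      case False
      then have "S \<subseteq> {1..n}" using S by (auto simp: le_Suc_eq)
      then show ?thesis using S unfolding A_def by auto
    qed
  next
    fix S assume "S \<in> A \<union> insert (Suc n) ` B"
    then show "S \<in> {S. S \<subseteq> {1..Suc n} \<and> card S = Suc k}"
    proof
      assume "S \<in> A" then show ?thesis unfolding A_def by auto
    next
      assume "S \<in> insert (Suc n) ` B"
      then obtain T where T: "T \<in> B" "S = insert (Suc n) T" by blast
      have "finite T" "Suc n \<notin> T" using T finite_subset[of T "{1..n}"] unfolding B_def by auto
      then show ?thesis using T unfolding B_def by auto
    qed
  qed
  have disj: "A \<inter> insert (Suc n) ` B = {}" unfolding A_def by auto
  have inj: "inj_on (insert (Suc n)) B"
    unfolding B_def inj_on_def using insert_ident by (metis (no_types, lifting) atLeastAtMost_iff in_mono mem_Collect_eq not_less_eq_eq order_refl)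
  have "elem_sym (Suc n) (Suc k) z = (\<Sum>S\<in>A. \<Prod>j\<in>S. z j) + (\<Sum>S\<in>insert (Suc n) ` B. \<Prod>j\<in>S. z j)"
    unfolding elem_sym_def eq using fA fB disj by (simp add: sum.union_disjoint)
  also have "(\<Sum>S\<in>insert (Suc n) ` B. \<Prod>j\<in>S. z j) = (\<Sum>S\<in>B. z (Suc n) * (\<Prod>j\<in>S. z j))"
    unfolding sum.reindex[OF inj] o_def
  proof (intro sum.cong refl)
    fix S assume "S \<in> B"
    then have "finite S" "Suc n \<notin> S" using finite_subset[of S "{1..n}"] unfolding B_def by auto
    then show "prod z (insert (Suc n) S) = z (Suc n) * prod z S" by simp
  qed
  finally show ?thesis unfolding elem_sym_def A_def B_def by (simp add: sum_distrib_left)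
qed

lemma EE_0: "EE z n 0 = 1"
  by (induction n) (auto simp: EE_neg)

lemma elem_sym_EE: "elem_sym n r z = EE z n (int r)"
proof (induction n arbitrary: r)
  case 0
  have "{S. S \<subseteq> {1..0::nat} \<and> card S = r} = (if r = 0 then {{}} else {})" by auto
  then show ?case by (simp add: elem_sym_def)
next
  case (Suc n)
  show ?case
  proof (cases r)
    case 0 then show ?thesis by (simp add: elem_sym_0 EE_0)
  next
    case (Suc k) then show ?thesis by (simp add: elem_sym_Suc Suc.IH)
  qed
qed

lemma aux: fixes F K Mf :: real assumes "K \<noteq> 0" "Mf \<noteq> 0"
 shows "(real(m+Suc k) * F)/((real(Suc k) * K)*Mf) + F/(K*Mf) = real(m + 2*Suc k) * F / (real (Suc k) * K * Mf)"
proof -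
  have "F/(K*Mf) = (real(Suc k)*F)/((real(Suc k) * K)*Mf)" using assms by simp
  then have "(real(m+Suc k) * F)/((real(Suc k) * K)*Mf) + F/(K*Mf) = (real(m+Suc k) * F + real(Suc k)*F)/((real(Suc k) * K)*Mf)"
    by (simp add: add_divide_distrib)
  also have "real(m+Suc k) * F + real(Suc k)*F = real(m + 2*Suc k) * F" by (simp add: algebra_simps)
  finally show ?thesis by (simp add: mult.assoc)
qed

lemma cc_coef: "coef_c m1 i = cc m1 i"
proof (cases i)
  case 0 then show ?thesis by (simp add: coef_c_def cc_def)
next
  case (Suc k)
  have b1: "real ((m1 + Suc k) choose Suc k) = fact (m1 + Suc k) / (fact (Suc k) * fact m1)"
    by (subst binomial_fact) auto
  have b2: "real ((m1 + k) choose k) = fact (m1 + k) / (fact k * fact m1)"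
    by (subst binomial_fact) auto
  have b2': "real ((m1 + Suc k - 1) choose (Suc k - 1)) = fact (m1 + k) / (fact k * fact m1)"
    using b2 by simp
  have f1: "fact (m1 + Suc k) = real (m1 + Suc k) * fact (m1 + k)" by simp
  have f2: "fact (Suc k) = real (Suc k) * (fact k :: real)" by simp
  have "cc m1 i = real (m1 + Suc k) * fact (m1 + k) / ((real (Suc k) * fact k) * fact m1) + fact (m1 + k) / (fact k * fact m1)"
    unfolding Suc cc_def b1 b2' f1 f2 by simp
  also have "\<dots> = real (m1 + 2 * Suc k) * fact (m1 + k) / (real (Suc k) * fact k * fact m1)"
    by (rule aux) auto
  also have "\<dots> = coef_c m1 i"
    unfolding Suc coef_c_def by (simp add: mult.assoc)
  finally show ?thesis by simp
qed

lemma cc_coef2: "real (m1 + 2 + 2*i) * fact (m1 + i + 1) / (fact i * fact (m1 + 2)) = cc (m1+2) i"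
proof -
  have "real (m1 + 2 + 2*i) * fact (m1 + i + 1) / (fact i * fact (m1 + 2)) = coef_c (m1+2) i"
  proof (cases i)
    case 0 then show ?thesis by (simp add: coef_c_def)
  next
    case (Suc k) then show ?thesis by (simp add: coef_c_def)
  qed
  then show ?thesis by (simp add: cc_coef)
qed

definition inj_maps :: "nat set \<Rightarrow> nat set \<Rightarrow> (nat \<Rightarrow> nat) set" where
  "inj_maps D A = {f \<in> D \<rightarrow>\<^sub>E A. inj_on f D}"

definition PP :: "(nat \<Rightarrow> real) \<Rightarrow> (nat \<Rightarrow> nat) \<Rightarrow> nat set \<Rightarrow> nat set \<Rightarrow> real" where
  "PP z e D A = (\<Sum>f\<in>inj_maps D A. \<Prod>d\<in>D. z (f d) ^ e d)"

lemma finite_inj_maps: "finite D \<Longrightarrow> finite A \<Longrightarrow> finite (inj_maps D A)"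
  unfolding inj_maps_def by (rule finite_subset[of _ "D \<rightarrow>\<^sub>E A"]) (auto intro: finite_PiE)

lemma inj_maps_insert:
  assumes "x \<notin> A"
  shows "inj_maps D (insert x A) = inj_maps D A \<union> (\<Union>d\<in>D. (\<lambda>g. g(d:=x)) ` inj_maps (D-{d}) A)"
proof (intro equalityI subsetI)
  fix f assume f: "f \<in> inj_maps D (insert x A)"
  show "f \<in> inj_maps D A \<union> (\<Union>d\<in>D. (\<lambda>g. g(d:=x)) ` inj_maps (D-{d}) A)"
  proof (cases "x \<in> f ` D")
    case False
    then have "f \<in> inj_maps D A" using f unfolding inj_maps_def by (auto simp: PiE_iff)
    then show ?thesis by blast
  next
    case True
    then obtain d where d: "d \<in> D" "f d = x" by auto
    define g where "g = f(d := undefined)"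
    have "g \<in> inj_maps (D-{d}) A"
      unfolding inj_maps_def
    proof (intro CollectI conjI)
      show "g \<in> (D-{d}) \<rightarrow>\<^sub>E A"
      proof (rule PiE_I)
        fix d' assume "d' \<in> D - {d}"
        then have "f d' \<noteq> x" "f d' \<in> insert x A" using f d unfolding inj_maps_def inj_on_def
          by (auto simp: PiE_iff)
        then show "g d' \<in> A" using \<open>d' \<in> D - {d}\<close> unfolding g_def by auto
      next
        fix d' assume "d' \<notin> D - {d}"
        then show "g d' = undefined" using f unfolding g_def inj_maps_def by (auto simp: PiE_iff extensional_def)
      qed
      show "inj_on g (D - {d})" using f unfolding g_def inj_maps_def inj_on_def by auto
    qed
    moreover have "f = g(d := x)" unfolding g_def using d by auto
    ultimately show ?thesis using d by blast
  qed
next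
  fix f assume "f \<in> inj_maps D A \<union> (\<Union>d\<in>D. (\<lambda>g. g(d:=x)) ` inj_maps (D-{d}) A)"
  then show "f \<in> inj_maps D (insert x A)"
  proof
    assume "f \<in> inj_maps D A" then show ?thesis unfolding inj_maps_def by (auto simp: PiE_iff)
  next
    assume "f \<in> (\<Union>d\<in>D. (\<lambda>g. g(d:=x)) ` inj_maps (D-{d}) A)"
    then obtain d g where d: "d \<in> D" "g \<in> inj_maps (D-{d}) A" "f = g(d:=x)" by blast
    have "f \<in> D \<rightarrow>\<^sub>E insert x A" using d unfolding inj_maps_def by (auto simp: PiE_iff extensional_def)
    moreover have "inj_on f D"
      using d assms unfolding inj_maps_def inj_on_def by (auto simp: PiE_iff)
    ultimately show ?thesis unfolding inj_maps_def by blast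
  qed
qed

lemma PP_insert:
  assumes "x \<notin> A" "finite A" "finite D"
  shows "PP z e D (insert x A) = PP z e D A + (\<Sum>d\<in>D. z x ^ e d * PP z e (D-{d}) A)"
proof -
  define F where "F f = (\<Prod>d\<in>D. z (f d) ^ e d)" for f
  have fin: "finite (inj_maps D' A)" if "finite D'" for D' using finite_inj_maps that assms by blast
  have disj1: "inj_maps D A \<inter> (\<Union>d\<in>D. (\<lambda>g. g(d:=x)) ` inj_maps (D-{d}) A) = {}"
    using assms(1) unfolding inj_maps_def by (auto simp: PiE_iff)
  have disj2: "\<forall>d1\<in>D. \<forall>d2\<in>D. d1 \<noteq> d2 \<longrightarrow>
      (\<lambda>g. g(d1:=x)) ` inj_maps (D-{d1}) A \<inter> (\<lambda>g. g(d2:=x)) ` inj_maps (D-{d2}) A = {}"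
  proof (intro ballI impI)
    fix d1 d2 assume "d1 \<in> D" "d2 \<in> D" "d1 \<noteq> d2"
    show "(\<lambda>g. g(d1:=x)) ` inj_maps (D-{d1}) A \<inter> (\<lambda>g. g(d2:=x)) ` inj_maps (D-{d2}) A = {}"
    proof (rule ccontr)
      assume "\<not> ?thesis"
      then obtain g1 g2 where g: "g1 \<in> inj_maps (D-{d1}) A" "g2 \<in> inj_maps (D-{d2}) A"
        "g1(d1:=x) = g2(d2:=x)" by blast
      then have "(g1(d1:=x)) d1 = (g2(d2:=x)) d1" by simp
      then have "x = g2 d1" using \<open>d1 \<noteq> d2\<close> by simp
      moreover have "g2 d1 \<in> A" using g(2) \<open>d1 \<in> D\<close> \<open>d1 \<noteq> d2\<close> unfolding inj_maps_def by (auto simp: PiE_iff)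
      ultimately show False using assms(1) by simp
    qed
  qed
  have inj: "inj_on (\<lambda>g. g(d:=x)) (inj_maps (D-{d}) A)" for d
  proof (rule inj_onI)
    fix g1 g2 assume g: "g1 \<in> inj_maps (D-{d}) A" "g2 \<in> inj_maps (D-{d}) A" "g1(d:=x) = g2(d:=x)"
    show "g1 = g2"
    proof
      fix y show "g1 y = g2 y"
      proof (cases "y = d")
        case True then show ?thesis using g unfolding inj_maps_def by (auto simp: PiE_iff extensional_def)
      next
        case False then show ?thesis using fun_cong[OF g(3), of y] by simp
      qed
    qed
  qed
  have prodeq: "F (g(d:=x)) = z x ^ e d * (\<Prod>d'\<in>D-{d}. z (g d') ^ e d')" if "d \<in> D" for g d
  proof -
    have "F (g(d:=x)) = z x ^ e d * (\<Prod>d'\<in>D-{d}. z ((g(d:=x)) d') ^ e d')"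
      unfolding F_def using prod.remove[OF assms(3) that, of "\<lambda>d'. z ((g(d:=x)) d') ^ e d'"] by simp
    also have "(\<Prod>d'\<in>D-{d}. z ((g(d:=x)) d') ^ e d') = (\<Prod>d'\<in>D-{d}. z (g d') ^ e d')"
      by (intro prod.cong) auto
    finally show ?thesis .
  qed
  have "PP z e D (insert x A) = sum F (inj_maps D A) + sum F (\<Union>d\<in>D. (\<lambda>g. g(d:=x)) ` inj_maps (D-{d}) A)"
    unfolding PP_def F_def[symmetric] inj_maps_insert[OF assms(1)]
    by (rule sum.union_disjoint) (use fin assms disj1 in auto)
  also have "sum F (\<Union>d\<in>D. (\<lambda>g. g(d:=x)) ` inj_maps (D-{d}) A) = (\<Sum>d\<in>D. sum F ((\<lambda>g. g(d:=x)) ` inj_maps (D-{d}) A))"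
    by (rule sum.UNION_disjoint) (use fin assms disj2 in auto)
  also have "\<dots> = (\<Sum>d\<in>D. z x ^ e d * PP z e (D-{d}) A)"
  proof (intro sum.cong refl)
    fix d assume "d \<in> D"
    have "sum F ((\<lambda>g. g(d:=x)) ` inj_maps (D-{d}) A) = (\<Sum>g\<in>inj_maps (D-{d}) A. F (g(d:=x)))"
      by (simp add: sum.reindex[OF inj])
    also have "\<dots> = z x ^ e d * PP z e (D-{d}) A"
      unfolding PP_def sum_distrib_left using prodeq[OF \<open>d \<in> D\<close>] by simp
    finally show "sum F ((\<lambda>g. g(d:=x)) ` inj_maps (D-{d}) A) = z x ^ e d * PP z e (D-{d}) A" .
  qed
  finally show ?thesis unfolding PP_def F_def by simp
qed

definition cnt :: "(nat \<Rightarrow> nat) \<Rightarrow> nat set \<Rightarrow> nat \<Rightarrow> nat" where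
  "cnt e D k = card {d\<in>D. e d = k}"

lemma cnt_remove: "finite D \<Longrightarrow> d \<in> D \<Longrightarrow> cnt e (D-{d}) k = (if e d = k then cnt e D k - 1 else cnt e D k)"
proof -
  assume "finite D" "d \<in> D"
  have "{d'\<in>D-{d}. e d' = k} = {d'\<in>D. e d' = k} - {d}" by auto
  then show ?thesis unfolding cnt_def using \<open>finite D\<close> \<open>d \<in> D\<close> by (simp add: card_Diff_singleton_if)
qed

lemma fact_pred: "real a * fact (a - 1) = (if a > 0 then fact a else (0::real))"
  by (cases a) auto

lemma sum_class: "finite D \<Longrightarrow> (\<Sum>d\<in>D. if e d = k then T else 0) = real (cnt e D k) * (T::real)"
  unfolding cnt_def by (simp add: sum.inter_filter[symmetric])

lemma PP_count:
  assumes "finite D" "\<forall>d\<in>D. e d \<le> 2"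
  shows "PP z e D {1..n} = fact (cnt e D 2) * fact (cnt e D 1) * fact (cnt e D 0)
           * GG z n (cnt e D 2) (cnt e D 1) (cnt e D 0)"
  using assms
proof (induction n arbitrary: D)
  case 0
  show ?case
  proof (cases "D = {}")
    case True
    then show ?thesis by (simp add: PP_def inj_maps_def cnt_def)
  next
    case False
    then obtain d where d: "d \<in> D" by blast
    have "inj_maps D {1..0} = {}" using d unfolding inj_maps_def by auto
    moreover have "cnt e D (e d) > 0" unfolding cnt_def using d 0 by (auto simp: card_gt_0_iff)
    moreover have "e d = 0 \<or> e d = 1 \<or> e d = 2" using d 0 by auto
    ultimately show ?thesis unfolding PP_def by auto
  qed
next
  case (Suc n)
  define x where "x = z (Suc n)"
  define a where "a = cnt e D 2"
  define b where "b = cnt e D 1"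
  define c where "c = cnt e D 0"
  define T2 where "T2 = x^2 * (fact (a-1) * fact b * fact c * GG z n (a-1) b c)"
  define T1 where "T1 = x * (fact a * fact (b-1) * fact c * GG z n a (b-1) c)"
  define T0 where "T0 = fact a * fact b * fact (c-1) * GG z n a b (c-1)"
  have fD: "finite D" and e2: "\<forall>d\<in>D. e d \<le> 2" using Suc.prems by auto
  have ins: "{1..Suc n} = insert (Suc n) {1..n}" by auto
  have hterm: "x ^ e d * PP z e (D-{d}) {1..n} =
     (if e d = 2 then T2 else 0) + (if e d = 1 then T1 else 0) + (if e d = 0 then T0 else 0)"
    if "d \<in> D" for d
  proof -
    have IHd: "PP z e (D-{d}) {1..n} = fact (cnt e (D-{d}) 2) * fact (cnt e (D-{d}) 1) * fact (cnt e (D-{d}) 0)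
           * GG z n (cnt e (D-{d}) 2) (cnt e (D-{d}) 1) (cnt e (D-{d}) 0)"
      using Suc.IH[of "D-{d}"] fD e2 by auto
    have "e d = 0 \<or> e d = 1 \<or> e d = 2" using e2 that by auto
    then show ?thesis
      unfolding IHd cnt_remove[OF fD that] a_def[symmetric] b_def[symmetric] c_def[symmetric]
        T2_def T1_def T0_def by auto
  qed
  have "PP z e D {1..Suc n} = PP z e D {1..n} + (\<Sum>d\<in>D. x ^ e d * PP z e (D-{d}) {1..n})"
    unfolding ins x_def by (rule PP_insert) (use fD in auto)
  also have "(\<Sum>d\<in>D. x ^ e d * PP z e (D-{d}) {1..n}) = real a * T2 + real b * T1 + real c * T0"
  proof -
    have "(\<Sum>d\<in>D. x ^ e d * PP z e (D-{d}) {1..n}) =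
      (\<Sum>d\<in>D. (if e d = 2 then T2 else 0) + (if e d = 1 then T1 else 0) + (if e d = 0 then T0 else 0))"
      by (rule sum.cong) (auto simp only: hterm)
    also have "\<dots> = real a * T2 + real b * T1 + real c * T0"
      unfolding sum.distrib sum_class[OF fD] a_def b_def c_def by simp
    finally show ?thesis .
  qed
  also have "PP z e D {1..n} = fact a * fact b * fact c * GG z n a b c"
    using Suc.IH[OF fD e2] a_def b_def c_def by simp
  also have "real a * T2 = fact a * fact b * fact c * (if a > 0 then x^2 * GG z n (a-1) b c else 0)"
    using fact_pred[of a] unfolding T2_def by (cases "a > 0") (simp_all add: algebra_simps)
  also have "real b * T1 = fact a * fact b * fact c * (if b > 0 then x * GG z n a (b-1) c else 0)"
    using fact_pred[of b] unfolding T1_def by (cases "b > 0") (simp_all add: algebra_simps)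
  also have "real c * T0 = fact a * fact b * fact c * (if c > 0 then GG z n a b (c-1) else 0)"
    using fact_pred[of c] unfolding T0_def by (cases "c > 0") (simp_all add: algebra_simps)
  finally show ?case
    unfolding a_def[symmetric] b_def[symmetric] c_def[symmetric] GG.simps x_def
    by (simp only: ring_distribs)
qed

theorem lemma3p5:
  fixes n m2 m1 :: nat and z :: "nat \<Rightarrow> real"
  assumes "n \<ge> 1" and "m2 \<ge> 1"
  shows "M m2 m1 n z =
    fact m2 * fact m1 * (real n - real m1 - real m2) *
      (\<Sum>i=0..m2. (-1)^i * coef_c m1 i * elem_sym n (m2 - i) z * elem_sym n (m2 + m1 + i) z)
    - fact (m2 - 1) * fact (m1 + 2) *
      (\<Sum>i=0..m2-1. (-1)^i * (real (m1 + 2 + 2*i) * fact (m1 + i + 1) / (fact i * fact (m1 + 2)))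
          * elem_sym n (m2 - 1 - i) z * elem_sym n (m2 + m1 + 1 + i) z)"
proof -
  define N where "N = m1 + m2 + 1"
  define e1 where "e1 j = (if j \<le> m2 then 2 else if j \<le> m2 + m1 then 1 else (0::nat))" for j
  define e2 where "e2 j = (if j \<le> m2 - 1 then 2 else (1::nat))" for j
  have dt: "distinct_tuples N n = inj_maps {1..N} {1..n}"
    unfolding distinct_tuples_def inj_maps_def by simp
  have split1: "{1..N} = ({1..m2} \<union> {m2+1..m2+m1}) \<union> {N}" unfolding N_def by auto
  have split2: "{1..N} = {1..m2-1} \<union> {m2..m2+m1+1}" unfolding N_def using assms(2) by auto
  have p1: "(\<Prod>j\<in>{1..m2}. (z (b j))^2) * (\<Prod>j\<in>{m2+1..m2+m1}. z (b j))
      = (\<Prod>j\<in>{1..N}. z (b j) ^ e1 j)" for b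
  proof -
    have "(\<Prod>j\<in>{1..N}. z (b j) ^ e1 j) = (\<Prod>j\<in>{1..m2}. z (b j) ^ e1 j) * (\<Prod>j\<in>{m2+1..m2+m1}. z (b j) ^ e1 j)
        * (\<Prod>j\<in>{N}. z (b j) ^ e1 j)"
      unfolding split1
      apply (subst prod.union_disjoint)
         apply (simp_all add: N_def)
      apply (subst prod.union_disjoint)
         apply auto
      done
    also have "(\<Prod>j\<in>{1..m2}. z (b j) ^ e1 j) = (\<Prod>j\<in>{1..m2}. (z (b j))^2)"
      by (rule prod.cong) (auto simp: e1_def)
    also have "(\<Prod>j\<in>{m2+1..m2+m1}. z (b j) ^ e1 j) = (\<Prod>j\<in>{m2+1..m2+m1}. z (b j))"
      by (rule prod.cong) (auto simp: e1_def)
    also have "(\<Prod>j\<in>{N}. z (b j) ^ e1 j) = 1" by (simp add: e1_def N_def)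
    finally show ?thesis by simp
  qed
  have p2: "(\<Prod>j\<in>{1..m2-1}. (z (b j))^2) * (\<Prod>j\<in>{m2..m2+m1+1}. z (b j))
      = (\<Prod>j\<in>{1..N}. z (b j) ^ e2 j)" for b
  proof -
    have "(\<Prod>j\<in>{1..N}. z (b j) ^ e2 j) = (\<Prod>j\<in>{1..m2-1}. z (b j) ^ e2 j) * (\<Prod>j\<in>{m2..m2+m1+1}. z (b j) ^ e2 j)"
      unfolding split2 by (rule prod.union_disjoint) auto
    also have "(\<Prod>j\<in>{1..m2-1}. z (b j) ^ e2 j) = (\<Prod>j\<in>{1..m2-1}. (z (b j))^2)"
      by (rule prod.cong) (auto simp: e2_def)
    also have "(\<Prod>j\<in>{m2..m2+m1+1}. z (b j) ^ e2 j) = (\<Prod>j\<in>{m2..m2+m1+1}. z (b j))"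
      using assms(2) by (intro prod.cong) (auto simp: e2_def)
    finally show ?thesis by simp
  qed
  have c12: "cnt e1 {1..N} 2 = m2"
  proof -
    have "{d\<in>{1..N}. e1 d = 2} = {1..m2}" unfolding e1_def N_def by auto
    then show ?thesis unfolding cnt_def by simp
  qed
  have c11: "cnt e1 {1..N} 1 = m1"
  proof -
    have "{d\<in>{1..N}. e1 d = 1} = {m2+1..m2+m1}" unfolding e1_def N_def by auto
    then show ?thesis unfolding cnt_def by simp
  qed
  have c10: "cnt e1 {1..N} 0 = 1"
  proof -
    have "{d\<in>{1..N}. e1 d = 0} = {N}" unfolding e1_def N_def by auto
    then show ?thesis unfolding cnt_def by simp
  qed
  have c22: "cnt e2 {1..N} 2 = m2 - 1"
  proof -
    have "{d\<in>{1..N}. e2 d = 2} = {1..m2-1}" unfolding e2_def N_def by auto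
    then show ?thesis unfolding cnt_def by simp
  qed
  have c21: "cnt e2 {1..N} 1 = m1 + 2"
  proof -
    have "{d\<in>{1..N}. e2 d = 1} = {m2..m2+m1+1}" unfolding e2_def N_def using assms(2) by auto
    then show ?thesis unfolding cnt_def using assms(2) by simp
  qed
  have c20: "cnt e2 {1..N} 0 = 0"
  proof -
    have "{d\<in>{1..N}. e2 d = 0} = {}" unfolding e2_def by auto
    then show ?thesis unfolding cnt_def by simp
  qed
  have M1: "M m2 m1 n z = PP z e1 {1..N} {1..n} - PP z e2 {1..N} {1..n}"
    unfolding M_def PP_def N_def[symmetric] dt p1 p2 by simp
  have PP1: "PP z e1 {1..N} {1..n} = fact m2 * fact m1 * (real n - real m1 - real m2) * GG z n m2 m1 0"
    using PP_count[of "{1..N}" e1 z n] unfolding c12 c11 c10 GG1 by (simp add: e1_def algebra_simps)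
  have PP2: "PP z e2 {1..N} {1..n} = fact (m2 - 1) * fact (m1 + 2) * GG z n (m2-1) (m1+2) 0"
    using PP_count[of "{1..N}" e2 z n] unfolding c22 c21 c20 by (simp add: e2_def)
  have S1: "GG z n m2 m1 0 = (\<Sum>i=0..m2. (-1)^i * coef_c m1 i * elem_sym n (m2 - i) z * elem_sym n (m2 + m1 + i) z)"
    unfolding main_id atLeast0AtMost
    by (intro sum.cong refl) (auto simp: cc_coef elem_sym_EE of_nat_diff)
  have S2: "GG z n (m2-1) (m1+2) 0 = (\<Sum>i=0..m2-1. (-1)^i * (real (m1 + 2 + 2*i) * fact (m1 + i + 1) / (fact i * fact (m1 + 2)))
          * elem_sym n (m2 - 1 - i) z * elem_sym n (m2 + m1 + 1 + i) z)"
    unfolding main_id atLeast0AtMost cc_coef2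
  proof (intro sum.cong refl)
    fix i assume "i \<in> {..m2-1}"
    then have "int (m2 - 1 - i) = int (m2 - 1) - int i" "int (m2 + m1 + 1 + i) = int (m2 - 1) + int (m1 + 2) + int i"
      using assms(2) by auto
    then show "(-1)^i * cc (m1+2) i * EE z n (int (m2 - 1) - int i) * EE z n (int (m2 - 1) + int (m1 + 2) + int i)
      = (-1)^i * cc (m1+2) i * elem_sym n (m2 - 1 - i) z * elem_sym n (m2 + m1 + 1 + i) z"
      by (simp only: elem_sym_EE)
  qed
  show ?thesis unfolding M1 PP1 PP2 S1 S2 by simp
qed

end
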